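(* Let $n$ be a nonnegative integer and let $x,y$ be complex numbers such that no denominator below vanishes. Then \[ \sum_{k=0}^{2n}(-1)^k\binom{2n}{k}\frac{\binom{x+k}{k}\binom{y+k}{k}}{\binom{x+2n}{k}\binom{y+2n}{k}}H_{k}(x) =\frac{1}{2}\frac{\binom{x+n}{n}\binom{y+n}{n}\binom{1+x+y+2n}{2n}}{\binom{x+2n}{2n}\binom{y+2n}{2n}\binom{1+x+y+n}{n}} \big\{H_n(x)-H_n(1+x+y)+H_{2n}(1+x+y)\big\}. \]
   Context: For complex $z$ and a nonnegative integer $k$, $\binom{z}{k}=\frac{z(z-1)\cdots(z-k+1)}{k!}$ (with $\binom{z}{0}=1$). For complex $x$ and nonnegative integer $m$, the generalized harmonic number is $H_0(x)=0$ and $H_m(x)=\sum_{j=1}^m\frac{1}{x+j}$ for $m\ge 1$. The parameters are assumed to be such that all denominators (including those in the harmonic numbers) are nonzero. *)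

theory Defs
  imports "HOL-Analysis.Analysis"
begin

definition genH :: "nat \<Rightarrow> complex \<Rightarrow> complex" where
  "genH m x = (\<Sum>j=1..m. 1 / (x + of_nat j))"

end

theory Submission
  imports Defs
begin

definition A :: "complex \<Rightarrow> nat \<Rightarrow> nat \<Rightarrow> complex" where
  "A x m k = (\<Prod>i<k. (x + of_nat (i+1)) / (x + (of_nat (2*m) - of_nat i)))"

lemma A_Suc: "A x m (Suc k) = A x m k * ((x + of_nat (k+1)) / (x + (of_nat (2*m) - of_nat k)))"
  by (simp add: A_def)

lemma A_shift: "A x (Suc m) (Suc k) = (x+1)/(x + of_nat (2*m+2)) * A (x+1) m k"
  unfolding A_def prod.lessThan_Suc_shift
  by (simp add: algebra_simps)

lemma A_0[simp]: "A x m 0 = 1" by (simp add: A_def)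

lemma binom_facts:
  assumes "k \<le> 2*n"
  shows "of_nat (Suc (2*n) choose k) * (of_nat (2*n) + 1 - of_nat k) = (of_nat (2*n choose k) * (of_nat (2*n) + 1) :: complex)"
    and "of_nat (Suc (2*n) choose Suc k) * (of_nat k + 1) = (of_nat (2*n choose k) * (of_nat (2*n) + 1) :: complex)"
    and "of_nat (Suc (Suc (2*n)) choose Suc k) * (of_nat k + 1) = (of_nat (Suc (2*n) choose k) * (of_nat (2*n) + 2) :: complex)"
proof -
  have "(Suc (2*n) - k) * (Suc (2*n) choose k) = Suc (2*n) * (2*n choose k)"
    using binomial_absorb_comp[of "Suc (2*n)" k] by simp
  then have "of_nat ((Suc (2*n) - k) * (Suc (2*n) choose k)) = (of_nat (Suc (2*n) * (2*n choose k)) :: complex)"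
    by metis
  then show "of_nat (Suc (2*n) choose k) * (of_nat (2*n) + 1 - of_nat k) = (of_nat (2*n choose k) * (of_nat (2*n) + 1) :: complex)"
    using assms by (simp only: of_nat_mult of_nat_diff) (simp add: algebra_simps)
  have "Suc k * (Suc (2*n) choose Suc k) = Suc (2*n) * (2*n choose k)" by (rule Suc_times_binomial)
  then have "of_nat (Suc k * (Suc (2*n) choose Suc k)) = (of_nat (Suc (2*n) * (2*n choose k)) :: complex)"
    by metis
  then show "of_nat (Suc (2*n) choose Suc k) * (of_nat k + 1) = (of_nat (2*n choose k) * (of_nat (2*n) + 1) :: complex)"
    by (simp add: algebra_simps)
  have "Suc k * (Suc (Suc (2*n)) choose Suc k) = Suc (Suc (2*n)) * (Suc (2*n) choose k)" by (rule Suc_times_binomial)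
  then have "of_nat (Suc k * (Suc (Suc (2*n)) choose Suc k)) = (of_nat (Suc (Suc (2*n)) * (Suc (2*n) choose k)) :: complex)"
    by metis
  then show "of_nat (Suc (Suc (2*n)) choose Suc k) * (of_nat k + 1) = (of_nat (Suc (2*n) choose k) * (of_nat (2*n) + 2) :: complex)"
    by (simp add: algebra_simps)
qed

lemma neg_div: "(- a - b) / d = - ((a + b) / (d::complex))"
  by (simp add: diff_divide_distrib add_divide_distrib)

lemma atom_id:
  fixes s b1 b2 Dx Dy Z P Q p1 p2 w :: complex
  assumes "Dx \<noteq> 0" "Dy \<noteq> 0" "Z \<noteq> 0"
  shows "- (s*b2*(Dx*Dy/Z)*(P*(p1/Dx))*(Q*(p2/Dy))) - s*b1*(w/Z)*P*Q = (s*P*Q/Z)*(-b2*p1*p2 - b1*w)"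
  using assms by (simp add: field_simps)

definition tt :: "nat \<Rightarrow> complex \<Rightarrow> complex \<Rightarrow> nat \<Rightarrow> complex" where
  "tt n x y k = (-1)^k * of_nat (2*n choose k) * A (x+1) n k * A (y+1) n k"
definition uu :: "nat \<Rightarrow> complex \<Rightarrow> complex \<Rightarrow> nat \<Rightarrow> complex" where
  "uu n x y k = (-1)^k * of_nat (2*Suc n choose k) * A x (Suc n) k * A y (Suc n) k"
definition gg :: "nat \<Rightarrow> complex \<Rightarrow> complex \<Rightarrow> nat \<Rightarrow> complex" where
  "gg n x y k = (-1)^k * of_nat (Suc (2*n) choose k)
     * ((x + of_nat (2*n) + 2 - of_nat k) * (y + of_nat (2*n) + 2 - of_nat k)
        / ((x + of_nat (2*n) + 2) * (y + of_nat (2*n) + 2)))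
     * A (x+1) n k * A (y+1) n k"
definition rho :: "nat \<Rightarrow> complex \<Rightarrow> complex \<Rightarrow> complex" where
  "rho n x y = 2 * (2 * of_nat n + 1) * (x + y + of_nat n + 3) / ((x + of_nat (2*n) + 2) * (y + of_nat (2*n) + 2))"

lemma wz_term:
  fixes x y :: complex
  assumes k: "k \<le> 2*n"
    and hx: "x + 1 + (of_nat (2*n) - of_nat k) \<noteq> 0" and hy: "y + 1 + (of_nat (2*n) - of_nat k) \<noteq> 0"
    and dx: "x + of_nat (2*n) + 2 \<noteq> 0" and dy: "y + of_nat (2*n) + 2 \<noteq> 0"
  shows "uu n x y (Suc k) - rho n x y * tt n x y k = gg n x y (Suc k) - gg n x y k"
proof -
  define c where "c = (of_nat (2*n choose k) :: complex)"
  define b1 where "b1 = (of_nat (Suc (2*n) choose k) :: complex)"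
  define b2 where "b2 = (of_nat (Suc (2*n) choose Suc k) :: complex)"
  define a where "a = (of_nat (Suc (Suc (2*n)) choose Suc k) :: complex)"
  define N where "N = (of_nat n :: complex)"
  define K where "K = (of_nat k :: complex)"
  have nz1: "2*N + 1 - K \<noteq> 0"
  proof -
    have "of_nat (2*n+1-k) = (2*N+1-K)" using k unfolding N_def K_def by (simp add: of_nat_diff)
    moreover have "(of_nat (2*n+1-k) :: complex) \<noteq> 0" using k by (simp only: of_nat_eq_0_iff)
    ultimately show ?thesis by simp
  qed
  have nz2: "K + 1 \<noteq> 0" unfolding K_def by (metis of_nat_Suc of_nat_eq_0_iff Suc_neq_Zero add.commute)
  have e1: "b1 = c*(2*N+1)/(2*N+1-K)"
    using binom_facts(1)[OF k] nz1 unfolding b1_def c_def N_def K_def by (simp add: field_simps)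
  have e2: "b2 = c*(2*N+1)/(K+1)"
    using binom_facts(2)[OF k] nz2 unfolding b2_def c_def N_def K_def by (simp add: field_simps)
  have e3: "a = b1*(2*N+2)/(K+1)"
    using binom_facts(3)[OF k] nz2 unfolding b1_def a_def N_def K_def by (simp add: field_simps)
  have hx': "x + 1 + 2*N - K \<noteq> 0" using hx by (simp add: N_def K_def algebra_simps)
  have hy': "y + 1 + 2*N - K \<noteq> 0" using hy by (simp add: N_def K_def algebra_simps)
  have dx': "x + 2*N + 2 \<noteq> 0" using dx by (simp add: N_def)
  have dy': "y + 2*N + 2 \<noteq> 0" using dy by (simp add: N_def)
  have "2 * Suc n = Suc (Suc (2*n))" by simp
  define P where "P = A (x+1) n k"
  define Q where "Q = A (y+1) n k"
  have two_suc: "2 * Suc n = Suc (Suc (2*n))" by simp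
  have lhs: "uu n x y (Suc k) - rho n x y * tt n x y k =
     - ((-1)^k * a * ((x+1)/(x + 2*N+2)) * P * ((y+1)/(y+2*N+2)) * Q)
     - 2 * (2 * N + 1) * (x + y + N + 3) / ((x + 2*N + 2) * (y + 2*N + 2)) * ((-1)^k * c * P * Q)"
    unfolding uu_def tt_def rho_def A_shift two_suc
    apply (simp only: a_def[symmetric] c_def[symmetric] P_def[symmetric] Q_def[symmetric])
    using dx' dy' by (simp add: N_def field_simps) (simp only: neg_div)
  have rhs: "gg n x y (Suc k) - gg n x y k =
     - ((-1)^k * b2 * ((x + 2*N+2 - (K+1)) * (y + 2*N+2-(K+1)) / ((x + 2*N+2) * (y + 2*N+2)))
         * (P * ((x + 1 + (K+1)) / (x + 1 + (2*N - K)))) * (Q * ((y + 1 + (K+1)) / (y + 1 + (2*N - K)))))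
     - (-1)^k * b1 * ((x + 2*N+2 - K) * (y + 2*N+2-K) / ((x + 2*N+2) * (y + 2*N+2))) * P * Q"
    unfolding gg_def A_Suc
    apply (simp only: b1_def[symmetric] b2_def[symmetric] P_def[symmetric] Q_def[symmetric])
    by (simp add: N_def K_def)
  define X where "X = x + 2*N + 2"
  define Y where "Y = y + 2*N + 2"
  define E where "E = (-1)^k * P * Q / (X * Y)"
  have dX: "X \<noteq> 0" using dx' by (simp add: X_def)
  have dY: "Y \<noteq> 0" using dy' by (simp add: Y_def)
  have L: "uu n x y (Suc k) - rho n x y * tt n x y k = E * (- a*(x+1)*(y+1) - 2*(2*N+1)*(x+y+N+3)*c)"
    unfolding lhs X_def[symmetric] Y_def[symmetric] E_def using dX dY by (simp add: field_simps) (simp add: algebra_simps)?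
  define Dx where "Dx = x + 1 + (2*N - K)"
  define Dy where "Dy = y + 1 + (2*N - K)"
  have eqx: "x + 2*N+2-(K+1) = Dx" by (simp add: Dx_def algebra_simps)
  have eqy: "y + 2*N+2-(K+1) = Dy" by (simp add: Dy_def algebra_simps)
  have dDx: "Dx \<noteq> 0" using hx' by (simp add: Dx_def algebra_simps)
  have dDy: "Dy \<noteq> 0" using hy' by (simp add: Dy_def algebra_simps)
  have XY: "(x + 2*N+2) * (y + 2*N+2) = X * Y" by (simp add: X_def Y_def)
  have ux: "x + 1 + (K+1) = x + K + 2" and uy: "y + 1 + (K+1) = y + K + 2" by (simp_all add: algebra_simps)
  have R0: "gg n x y (Suc k) - gg n x y k = - ((-1)^k * b2 * (Dx * Dy / (X*Y)) * (P * ((x+K+2) / Dx)) * (Q * ((y+K+2) / Dy)))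
     - (-1)^k * b1 * ((x + 2*N+2 - K) * (y + 2*N+2-K) / (X*Y)) * P * Q"
    unfolding rhs eqx eqy XY ux uy Dx_def[symmetric] Dy_def[symmetric] ..
  have R: "gg n x y (Suc k) - gg n x y k = E * (- b2 * (x+K+2) * (y+K+2) - b1 * ((x + 2*N+2 - K) * (y + 2*N+2-K)))"
    unfolding R0 E_def by (rule atom_id[OF dDx dDy]) (simp add: dX dY)
  have core: "- a*(x+1)*(y+1) - 2*(2*N+1)*(x+y+N+3)*c = - b2 * (x+K+2) * (y+K+2) - b1 * ((x + 2*N+2 - K) * (y + 2*N+2-K))"
  proof -
    define M1 where "M1 = 2*N+1-K"
    define M2 where "M2 = K+1"
    have m1: "M1 \<noteq> 0" using nz1 by (simp add: M1_def)
    have m2: "M2 \<noteq> 0" using nz2 by (simp add: M2_def)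
    have "- (b1*(2*N+2)/M2)*(x+1)*(y+1) - 2*(2*N+1)*(x+y+N+3)*c = - (c*(2*N+1)/M2) * (x+K+2) * (y+K+2) - b1 * ((x + 2*N+2 - K) * (y + 2*N+2-K))"
      unfolding e1 M1_def[symmetric] using m1 m2 apply (simp add: field_simps)
      by (simp add: M1_def M2_def algebra_simps)
    then show ?thesis unfolding e3 e2 M2_def .
  qed
  show ?thesis unfolding L R core ..
qed


lemma wz_last:
  fixes x y :: complex
  shows "uu n x y (Suc (Suc (2*n))) = - gg n x y (Suc (2*n))"
proof -
  have two_suc: "2 * Suc n = Suc (Suc (2*n))" by simp
  show ?thesis
    unfolding uu_def gg_def two_suc A_shift
    by (simp add: algebra_simps) (simp only: neg_div minus_minus)
qed

definition S :: "nat \<Rightarrow> complex \<Rightarrow> complex \<Rightarrow> complex" where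
  "S n x y = (\<Sum>k=0..2*n. (-1)^k * of_nat (2*n choose k) * A x n k * A y n k)"

lemma wz_sum:
  fixes x y :: complex
  assumes hx: "\<And>j. 1 \<le> j \<Longrightarrow> j \<le> 2*n+2 \<Longrightarrow> x + of_nat j \<noteq> 0"
      and hy: "\<And>j. 1 \<le> j \<Longrightarrow> j \<le> 2*n+2 \<Longrightarrow> y + of_nat j \<noteq> 0"
  shows "S (Suc n) x y = rho n x y * S n (x+1) (y+1)"
proof -
  have dx: "x + of_nat (2*n) + 2 \<noteq> 0" using hx[of "2*n+2"] by (simp add: algebra_simps)
  have dy: "y + of_nat (2*n) + 2 \<noteq> 0" using hy[of "2*n+2"] by (simp add: algebra_simps)
  have step: "uu n x y (Suc k) = rho n x y * tt n x y k + (gg n x y (Suc k) - gg n x y k)" if k: "k < Suc (Suc (2*n))" for k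
  proof (cases "k \<le> 2*n")
    case True
    have "x + 1 + (of_nat (2*n) - of_nat k) = x + of_nat (2*n+1-k)"
      using True by (simp add: of_nat_diff algebra_simps)
    moreover have "x + of_nat (2*n+1-k) \<noteq> 0" using True by (intro hx) auto
    ultimately have h1: "x + 1 + (of_nat (2*n) - of_nat k) \<noteq> 0" by metis
    have "y + 1 + (of_nat (2*n) - of_nat k) = y + of_nat (2*n+1-k)"
      using True by (simp add: of_nat_diff algebra_simps)
    moreover have "y + of_nat (2*n+1-k) \<noteq> 0" using True by (intro hy) auto
    ultimately have h2: "y + 1 + (of_nat (2*n) - of_nat k) \<noteq> 0" by metis
    show ?thesis using wz_term[OF True h1 h2 dx dy] by (simp add: algebra_simps)
  next
    case False
    then have kk: "k = Suc (2*n)" using k by simp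
    have t0: "tt n x y k = 0" unfolding tt_def kk by simp
    have g0: "gg n x y (Suc k) = 0" unfolding gg_def kk by (simp del: binomial_Suc_Suc add: binomial_eq_0)
    show ?thesis using wz_last[of n x y] unfolding kk t0[unfolded kk] g0[unfolded kk] by simp
  qed
  have "S (Suc n) x y = (\<Sum>k\<le>Suc (Suc (2*n)). uu n x y k)"
    unfolding S_def uu_def atLeast0AtMost by simp
  also have "\<dots> = uu n x y 0 + (\<Sum>k<Suc (Suc (2*n)). uu n x y (Suc k))"
    by (simp only: sum.atMost_Suc_shift lessThan_Suc_atMost)
  also have "(\<Sum>k<Suc (Suc (2*n)). uu n x y (Suc k)) = (\<Sum>k<Suc (Suc (2*n)). rho n x y * tt n x y k + (gg n x y (Suc k) - gg n x y k))"
    by (rule sum.cong) (auto simp: step)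
  also have "\<dots> = rho n x y * (\<Sum>k<Suc (Suc (2*n)). tt n x y k) + (gg n x y (Suc (Suc (2*n))) - gg n x y 0)"
    by (simp only: sum.distrib sum_distrib_left sum_lessThan_telescope)
  also have "gg n x y (Suc (Suc (2*n))) = 0" unfolding gg_def by (simp del: binomial_Suc_Suc add: binomial_eq_0)
  also have "gg n x y 0 = 1" unfolding gg_def using dx dy by simp
  also have "uu n x y 0 = 1" unfolding uu_def by simp
  also have "(\<Sum>k<Suc (Suc (2*n)). tt n x y k) = (\<Sum>k\<le>2*n. tt n x y k)"
    by (simp add: lessThan_Suc_atMost[symmetric] tt_def)
  also have "(\<Sum>k\<le>2*n. tt n x y k) = S n (x+1) (y+1)"
    unfolding S_def tt_def atLeast0AtMost ..
  finally show ?thesis by simp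
qed

definition Nm :: "complex \<Rightarrow> nat \<Rightarrow> complex" where
  "Nm c n = (\<Prod>i<n. c + of_nat n + of_nat i)"

definition RR :: "nat \<Rightarrow> complex \<Rightarrow> complex \<Rightarrow> complex" where
  "RR n x y = fact (2*n) / fact n * Nm (x+y+2) n / (Nm (x+1) n * Nm (y+1) n)"

lemma Nm_a: "Nm c (Suc n) = Nm (c+1) n * (c + of_nat (2*n) + 1)"
  unfolding Nm_def prod.lessThan_Suc by (simp add: algebra_simps)

lemma Nm_b: "Nm c (Suc n) = (c + of_nat n + 1) * Nm (c+2) n"
  unfolding Nm_def prod.lessThan_Suc_shift by (simp add: algebra_simps)

lemma Nm_nz: "(\<And>i. i < n \<Longrightarrow> c + of_nat n + of_nat i \<noteq> 0) \<Longrightarrow> Nm c n \<noteq> 0"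
  unfolding Nm_def by (simp add: prod_zero_iff)

lemma fact_ratio: "(fact (2*Suc n) :: complex) / fact (Suc n) = fact (2*n) / fact n * (2 * (2 * of_nat n + 1))"
proof -
  have "2 * Suc n = Suc (Suc (2*n))" by simp
  then have a: "(fact (2*Suc n) :: complex) = fact (2*n) * (2 * of_nat n + 1) * (2 * (of_nat n + 1))"
    by (simp add: algebra_simps)
  have b: "(fact (Suc n) :: complex) = fact n * (of_nat n + 1)" by (simp add: algebra_simps)
  have c: "(of_nat n + 1 :: complex) \<noteq> 0" by (metis of_nat_Suc of_nat_eq_0_iff Suc_neq_Zero add.commute)
  have "(fact (2*Suc n) :: complex) / fact (Suc n) = (fact (2*n) * (2 * (2 * of_nat n + 1)) * (of_nat n + 1)) / (fact n * (of_nat n + 1))"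
    unfolding a b by (simp add: algebra_simps)
  also have "\<dots> = fact (2*n) * (2 * (2 * of_nat n + 1)) / fact n"
    using c by (rule mult_divide_mult_cancel_right)
  finally show ?thesis by simp
qed

lemma RR_step:
  fixes x y :: complex
  assumes hx: "\<And>j. 1 \<le> j \<Longrightarrow> j \<le> 2*n+2 \<Longrightarrow> x + of_nat j \<noteq> 0"
      and hy: "\<And>j. 1 \<le> j \<Longrightarrow> j \<le> 2*n+2 \<Longrightarrow> y + of_nat j \<noteq> 0"
  shows "RR (Suc n) x y = rho n x y * RR n (x+1) (y+1)"
proof -
  have dx: "x + of_nat (2*n) + 2 \<noteq> 0" using hx[of "2*n+2"] by (simp add: algebra_simps)
  have dy: "y + of_nat (2*n) + 2 \<noteq> 0" using hy[of "2*n+2"] by (simp add: algebra_simps)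
  have U: "Nm (x+2) n \<noteq> 0"
  proof (rule Nm_nz)
    fix i assume "i < n"
    then have "x + of_nat (n+2+i) \<noteq> 0" by (intro hx) auto
    then show "x + 2 + of_nat n + of_nat i \<noteq> 0" by (simp add: algebra_simps)
  qed
  have V: "Nm (y+2) n \<noteq> 0"
  proof (rule Nm_nz)
    fix i assume "i < n"
    then have "y + of_nat (n+2+i) \<noteq> 0" by (intro hy) auto
    then show "y + 2 + of_nat n + of_nat i \<noteq> 0" by (simp add: algebra_simps)
  qed
  have e1: "Nm (x+y+2) (Suc n) = (x + y + of_nat n + 3) * Nm (x+y+4) n"
    unfolding Nm_b by (simp add: algebra_simps)
  have e2: "Nm (x+1) (Suc n) = Nm (x+2) n * (x + of_nat (2*n) + 2)"
    unfolding Nm_a by (simp add: algebra_simps)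
  have e3: "Nm (y+1) (Suc n) = Nm (y+2) n * (y + of_nat (2*n) + 2)"
    unfolding Nm_a by (simp add: algebra_simps)
  have e4: "x + 1 + (y + 1) + 2 = x + y + 4" "x + 1 + 1 = x + 2" "y + 1 + 1 = y + 2" by simp_all
  show ?thesis
    unfolding RR_def e1 e2 e3 e4 rho_def fact_ratio
    using U V dx dy by (simp add: field_simps)
qed

lemma dixon:
  fixes x y :: complex
  assumes "\<And>j. 1 \<le> j \<Longrightarrow> j \<le> 2*n \<Longrightarrow> x + of_nat j \<noteq> 0 \<and> y + of_nat j \<noteq> 0 \<and> x + y + 1 + of_nat j \<noteq> 0"
  shows "S n x y = RR n x y"
  using assms
proof (induction n arbitrary: x y)
  case 0
  then show ?case by (simp add: S_def RR_def Nm_def)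
next
  case (Suc n)
  have hx: "\<And>j. 1 \<le> j \<Longrightarrow> j \<le> 2*n+2 \<Longrightarrow> x + of_nat j \<noteq> 0" using Suc.prems by simp
  have hy: "\<And>j. 1 \<le> j \<Longrightarrow> j \<le> 2*n+2 \<Longrightarrow> y + of_nat j \<noteq> 0" using Suc.prems by simp
  have "S n (x+1) (y+1) = RR n (x+1) (y+1)"
  proof (rule Suc.IH)
    fix j :: nat assume j: "1 \<le> j" "j \<le> 2*n"
    have "x + of_nat (j+1) \<noteq> 0 \<and> y + of_nat (j+1) \<noteq> 0 \<and> x + y + 1 + of_nat (j+2) \<noteq> 0"
      using Suc.prems[of "j+1"] Suc.prems[of "j+2"] j by auto
    then show "x + 1 + of_nat j \<noteq> 0 \<and> y + 1 + of_nat j \<noteq> 0 \<and> x + 1 + (y + 1) + 1 + of_nat j \<noteq> 0"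
      by (simp add: algebra_simps)
  qed
  then show ?case using wz_sum[OF hx hy] RR_step[OF hx hy] by simp
qed


lemma alg3: "(q::complex) * g * P + P * L * q = q * P * (g + L)"
  by (simp add: algebra_simps)

lemma ratio_alg:
  fixes A B :: complex
  assumes "A \<noteq> 0" "B \<noteq> 0"
  shows "((1 + 0) * B - A * (1 + 0)) / (B * B) = A / B * (1 / A - 1 / B)"
  using assms by (simp add: field_simps)

lemma deriv_ratio:
  fixes a b w :: complex
  assumes "w + a \<noteq> 0" "w + b \<noteq> 0"
  shows "((\<lambda>z. (z + a) / (z + b)) has_field_derivative (w + a) / (w + b) * (1 / (w + a) - 1 / (w + b))) (at w)"
proof -
  have "((\<lambda>z. (z + a) / (z + b)) has_field_derivative ((1 + 0) * (w + b) - (w + a) * (1 + 0)) / ((w + b) * (w + b))) (at w)"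
    by (rule DERIV_divide[OF DERIV_add[OF DERIV_ident DERIV_const] DERIV_add[OF DERIV_ident DERIV_const] assms(2)])
  moreover have "((1 + 0) * (w + b) - (w + a) * (1 + 0)) / ((w + b) * (w + b)) = (w + a) / (w + b) * (1 / (w + a) - 1 / (w + b))"
    using ratio_alg[OF assms] .
  ultimately show ?thesis by (rule DERIV_cong)
qed

lemma deriv_prod_ratio:
  fixes a b :: "nat \<Rightarrow> complex" and w :: complex
  assumes "finite I" "\<And>i. i \<in> I \<Longrightarrow> w + a i \<noteq> 0 \<and> w + b i \<noteq> 0"
  shows "((\<lambda>z. \<Prod>i\<in>I. (z + a i) / (z + b i)) has_field_derivative
           (\<Prod>i\<in>I. (w + a i) / (w + b i)) * (\<Sum>i\<in>I. 1 / (w + a i) - 1 / (w + b i))) (at w)"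
  using assms
proof (induction I rule: finite_induct)
  case empty
  then show ?case by simp
next
  case (insert j I)
  have q: "((\<lambda>z. (z + a j) / (z + b j)) has_field_derivative (w + a j) / (w + b j) * (1 / (w + a j) - 1 / (w + b j))) (at w)"
    using insert.prems by (intro deriv_ratio) auto
  have p: "((\<lambda>z. \<Prod>i\<in>I. (z + a i) / (z + b i)) has_field_derivative
           (\<Prod>i\<in>I. (w + a i) / (w + b i)) * (\<Sum>i\<in>I. 1 / (w + a i) - 1 / (w + b i))) (at w)"
    using insert.prems by (intro insert.IH) auto
  have "((\<lambda>z. (z + a j) / (z + b j) * (\<Prod>i\<in>I. (z + a i) / (z + b i))) has_field_derivative
      (w + a j) / (w + b j) * (1 / (w + a j) - 1 / (w + b j)) * (\<Prod>i\<in>I. (w + a i) / (w + b i))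
      + (\<Prod>i\<in>I. (w + a i) / (w + b i)) * (\<Sum>i\<in>I. 1 / (w + a i) - 1 / (w + b i)) * ((w + a j) / (w + b j))) (at w)"
    by (rule DERIV_mult[OF q p])
  then show ?case
    unfolding prod.insert[OF insert.hyps] sum.insert[OF insert.hyps]
    by (rule DERIV_cong) (rule alg3)
qed

lemma genH_alt: "genH m x = (\<Sum>i<m. 1 / (x + of_nat (i+1)))"
  unfolding genH_def using sum.atLeast1_atMost_eq[of "\<lambda>j. 1 / (x + of_nat j)" m] by simp

lemma genH_Suc: "genH (Suc m) x = genH m x + 1 / (x + of_nat (Suc m))"
  unfolding genH_alt by simp

lemma genH_add: "genH (m + p) x = genH m x + (\<Sum>i<p. 1 / (x + of_nat (m + 1 + i)))"
  by (induction p) (simp_all add: genH_Suc algebra_simps)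

lemma genH_rev:
  "k \<le> 2*n \<Longrightarrow> (\<Sum>i<k. 1 / (x + (of_nat (2*n) - of_nat i))) = genH (2*n) x - genH (2*n-k) x"
proof (induction k)
  case 0
  then show ?case by simp
next
  case (Suc k)
  then have IH: "(\<Sum>i<k. 1 / (x + (of_nat (2*n) - of_nat i))) = genH (2*n) x - genH (2*n-k) x" by simp
  have e: "2*n - k = Suc (2*n - Suc k)" using Suc.prems by simp
  have f: "of_nat (Suc (2*n - Suc k)) = (of_nat (2*n) - of_nat k :: complex)"
    using Suc.prems by (simp add: of_nat_diff)
  show ?case using IH unfolding sum.lessThan_Suc e genH_Suc f by simp
qed


lemma poch_nz:
  fixes w :: complex
  assumes "\<And>j. 1 \<le> j \<Longrightarrow> j \<le> m \<Longrightarrow> w + of_nat j \<noteq> 0"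
  shows "pochhammer (w+1) m \<noteq> 0"
proof
  assume "pochhammer (w+1) m = 0"
  then obtain k where k: "k < m" "w + 1 = - of_nat k" by (auto simp: pochhammer_eq_0_iff)
  have "w + of_nat (Suc k) = (w + 1) + of_nat k" by (simp add: algebra_simps)
  also have "\<dots> = 0" using k(2) by simp
  finally have "w + of_nat (Suc k) = 0" .
  moreover have "w + of_nat (Suc k) \<noteq> 0" using k by (intro assms) auto
  ultimately show False by simp
qed

lemma cancel_d: "(d::complex) \<noteq> 0 \<Longrightarrow> (p * (d * q)) * (a / d) = p * a * q"
  by (simp add: field_simps)

lemma A_poch:
  fixes w :: complex
  assumes hw: "\<And>j. 1 \<le> j \<Longrightarrow> j \<le> 2*n \<Longrightarrow> w + of_nat j \<noteq> 0"
  shows "k \<le> 2*n \<Longrightarrow> A w n k * pochhammer (w+1) (2*n) = pochhammer (w+1) k * pochhammer (w+1) (2*n-k)"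
proof (induction k)
  case 0
  then show ?case by simp
next
  case (Suc k)
  then have IH: "A w n k * pochhammer (w+1) (2*n) = pochhammer (w+1) k * pochhammer (w+1) (2*n-k)" by simp
  have e: "2*n - k = Suc (2*n - Suc k)" using Suc.prems by simp
  have f: "w + 1 + of_nat (2*n - Suc k) = w + (of_nat (2*n) - of_nat k)"
    using Suc.prems by (simp add: of_nat_diff algebra_simps)
  have g: "w + (of_nat (2*n) - of_nat k) = w + of_nat (2*n - k)"
    using Suc.prems by (simp add: of_nat_diff)
  have nz: "w + (of_nat (2*n) - of_nat k) \<noteq> 0" unfolding g using Suc.prems by (intro hw) auto
  have "A w n (Suc k) * pochhammer (w+1) (2*n) = (A w n k * pochhammer (w+1) (2*n)) * ((w + of_nat (k+1)) / (w + (of_nat (2*n) - of_nat k)))"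
    by (simp add: A_Suc algebra_simps)
  also have "\<dots> = pochhammer (w+1) k * (w + of_nat (k+1)) * pochhammer (w+1) (2*n - Suc k)"
    unfolding IH e pochhammer_rec' f by (rule cancel_d[OF nz])
  also have "\<dots> = pochhammer (w+1) (Suc k) * pochhammer (w+1) (2*n - Suc k)"
    by (simp add: pochhammer_rec' algebra_simps)
  finally show ?case .
qed

lemma A_sym:
  fixes w :: complex
  assumes hw: "\<And>j. 1 \<le> j \<Longrightarrow> j \<le> 2*n \<Longrightarrow> w + of_nat j \<noteq> 0" and k: "k \<le> 2*n"
  shows "A w n (2*n - k) = A w n k"
proof -
  have nz: "pochhammer (w+1) (2*n) \<noteq> 0" using poch_nz[of "2*n" w] hw by blast
  have "A w n (2*n - k) * pochhammer (w+1) (2*n) = A w n k * pochhammer (w+1) (2*n)"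
    using A_poch[OF hw, where k="2*n-k"] A_poch[OF hw, where k=k] k by (simp add: mult.commute)
  then show ?thesis using nz by simp
qed

lemma gch_ratio:
  fixes w :: complex
  shows "(w + of_nat k gchoose k) / (w + of_nat (2*n) gchoose k) = A w n k"
proof -
  have 1: "(w + of_nat k gchoose k) = (\<Prod>i<k. w + of_nat (i+1)) / fact k"
    unfolding gbinomial_pochhammer' pochhammer_prod by (simp add: atLeast0LessThan algebra_simps)
  have 2: "(w + of_nat (2*n) gchoose k) = (\<Prod>i<k. w + (of_nat (2*n) - of_nat i)) / fact k"
    using gbinomial_mult_fact'[of "w + of_nat (2*n)" k]
    by (simp add: atLeast0LessThan algebra_simps eq_divide_eq)
  show ?thesis unfolding 1 2 A_def by (simp add: prod_dividef)
qed


lemma gch_poch: "(w + of_nat m gchoose m) = pochhammer (w+1) m / (fact m :: complex)"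
  unfolding gbinomial_pochhammer' by simp

lemma poch_2n: "pochhammer (w+1) (2*n) = pochhammer (w+1) n * Nm (w+1) n"
proof -
  have "pochhammer (w+1) (2*n) = pochhammer (w+1) (n+n)" by (simp add: mult_2)
  also have "\<dots> = pochhammer (w+1) n * pochhammer (w + 1 + of_nat n) n" by (rule pochhammer_product')
  also have "pochhammer (w + 1 + of_nat n) n = Nm (w+1) n"
    unfolding Nm_def pochhammer_prod atLeast0LessThan ..
  finally show ?thesis .
qed

lemma ratio_atoms:
  fixes Px Py Pz Nx Ny Nz fn f2 :: complex
  assumes "Px \<noteq> 0" "Py \<noteq> 0" "Pz \<noteq> 0" "Nx \<noteq> 0" "Ny \<noteq> 0" "fn \<noteq> 0" "f2 \<noteq> 0"
  shows "(Px/fn)*(Py/fn)*(Pz*Nz/f2) / ((Px*Nx/f2)*(Py*Ny/f2)*(Pz/fn)) = f2/fn*Nz/(Nx*Ny)"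
  using assms by (simp add: field_simps)

lemma abcd: "(a::complex) * b / (c * d) = a / d * (b / c)"
  by (simp add: mult.commute)

lemma RR_alt: "RR n w y = fact (2*n) / fact n / Nm (y+1) n *
   (\<Prod>i<n. (w + (y + 2 + of_nat n + of_nat i)) / (w + (1 + of_nat n + of_nat i)))"
proof -
  have "(\<Prod>i<n. (w + (y + 2 + of_nat n + of_nat i)) / (w + (1 + of_nat n + of_nat i))) = Nm (w+y+2) n / Nm (w+1) n"
    unfolding Nm_def prod_dividef by (simp add: algebra_simps)
  then show ?thesis unfolding RR_def abcd by simp
qed

theorem theorem1:
  fixes n :: nat and x y :: complex
  assumes hx: "\<And>k. k \<le> 2*n \<Longrightarrow> ((x + of_nat (2*n)) gchoose k) \<noteq> 0"
      and hy: "\<And>k. k \<le> 2*n \<Longrightarrow> ((y + of_nat (2*n)) gchoose k) \<noteq> 0"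
      and hxy: "((1 + x + y + of_nat n) gchoose n) \<noteq> 0"
      and hHx: "\<And>j. 1 \<le> j \<Longrightarrow> j \<le> 2*n \<Longrightarrow> x + of_nat j \<noteq> 0"
      and hHxy: "\<And>j. 1 \<le> j \<Longrightarrow> j \<le> 2*n \<Longrightarrow> 1 + x + y + of_nat j \<noteq> 0"
  shows "(\<Sum>k=0..2*n. (-1)^k * of_nat ((2*n) choose k)
            * (((x + of_nat k) gchoose k) * ((y + of_nat k) gchoose k))
            / (((x + of_nat (2*n)) gchoose k) * ((y + of_nat (2*n)) gchoose k))
            * genH k x)
       = 1/2 * (((x + of_nat n) gchoose n) * ((y + of_nat n) gchoose n)
                 * ((1 + x + y + of_nat (2*n)) gchoose (2*n)))
             / (((x + of_nat (2*n)) gchoose (2*n)) * ((y + of_nat (2*n)) gchoose (2*n))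
                 * ((1 + x + y + of_nat n) gchoose n))
             * (genH n x - genH n (1 + x + y) + genH (2*n) (1 + x + y))"
proof -
  define z where "z = 1 + x + y"
  have hyj: "\<And>j. 1 \<le> j \<Longrightarrow> j \<le> 2*n \<Longrightarrow> y + of_nat j \<noteq> 0"
  proof -
    fix j :: nat assume j: "1 \<le> j" "j \<le> 2*n"
    have "pochhammer (y+1) (2*n) \<noteq> 0"
      using hy[of "2*n"] gch_poch[of y "2*n"] by auto
    then have ne: "\<forall>k<2*n. y + 1 \<noteq> - of_nat k" by (simp add: pochhammer_eq_0_iff)
    show "y + of_nat j \<noteq> 0"
    proof
      assume "y + of_nat j = 0"
      then have "y + 1 = - of_nat (j - 1)" using j by (simp add: of_nat_diff eq_neg_iff_add_eq_0 algebra_simps)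
      moreover have "j - 1 < 2*n" using j by simp
      ultimately show False using ne by blast
    qed
  qed
  define c where "c k = (-1)^k * of_nat (2*n choose k) * A y n k" for k
  define F where "F = (\<lambda>j::nat. - (of_nat j :: complex)) ` {1..2*n} \<union> (\<lambda>j. - (y + 1 + of_nat j)) ` {1..2*n}"
  define U where "U = - F"
  have openU: "open U" unfolding U_def F_def by (intro open_Compl finite_imp_closed) auto
  have memU: "w + of_nat j \<noteq> 0 \<and> w + y + 1 + of_nat j \<noteq> 0" if "w \<in> U" "1 \<le> j" "j \<le> 2*n" for w j
  proof -
    have "w \<noteq> - of_nat j" "w \<noteq> - (y+1+ of_nat j)" using that unfolding U_def F_def by auto
    then show ?thesis by (auto simp: eq_neg_iff_add_eq_0 algebra_simps)
  qed
  have xU: "x \<in> U"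
  proof -
    have a1: "\<forall>j\<in>{1..2*n}. x \<noteq> - of_nat j"
      using hHx by (auto simp: eq_neg_iff_add_eq_0)
    have a2: "\<forall>j\<in>{1..2*n}. x \<noteq> - (y + 1 + of_nat j)"
    proof
      fix j assume "j \<in> {1..2*n}"
      then have "1 + x + y + of_nat j \<noteq> 0" using hHxy by auto
      then show "x \<noteq> - (y + 1 + of_nat j)" by (auto simp: algebra_simps)
    qed
    have "x \<notin> (\<lambda>j::nat. - (of_nat j :: complex)) ` {1..2*n}" using a1 by blast
    moreover have "x \<notin> (\<lambda>j. - (y + 1 + of_nat j)) ` {1..2*n}" using a2 by blast
    ultimately show ?thesis unfolding U_def F_def by blast
  qed
  have SR: "S n w y = RR n w y" if "w \<in> U" for w
    using memU[OF that] hyj by (intro dixon) auto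
  have Sfun: "(\<lambda>w. S n w y) = (\<lambda>w. \<Sum>k\<in>{0..2*n}. c k * A w n k)"
    by (rule ext) (simp add: S_def c_def mult_ac)
  define L where "L k = genH k x - (genH (2*n) x - genH (2*n-k) x)" for k
  have dA: "((\<lambda>w. A w n k) has_field_derivative A x n k * L k) (at x)" if k: "k \<le> 2*n" for k
  proof -
    have "((\<lambda>w. \<Prod>i\<in>{..<k}. (w + of_nat (i+1)) / (w + (of_nat (2*n) - of_nat i))) has_field_derivative
        (\<Prod>i\<in>{..<k}. (x + of_nat (i+1)) / (x + (of_nat (2*n) - of_nat i)))
          * (\<Sum>i\<in>{..<k}. 1 / (x + of_nat (i+1)) - 1 / (x + (of_nat (2*n) - of_nat i)))) (at x)"
    proof (rule deriv_prod_ratio)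
      fix i assume i: "i \<in> {..<k}"
      have "x + of_nat (i+1) \<noteq> 0" using i k by (intro hHx) auto
      moreover have "x + (of_nat (2*n) - of_nat i) = x + of_nat (2*n - i)" using i k by (simp add: of_nat_diff)
      moreover have "x + of_nat (2*n - i) \<noteq> 0" using i k by (intro hHx) auto
      ultimately show "x + of_nat (i+1) \<noteq> 0 \<and> x + (of_nat (2*n) - of_nat i) \<noteq> 0" by simp
    qed auto
    moreover have "(\<lambda>w. A w n k) = (\<lambda>w. \<Prod>i\<in>{..<k}. (w + of_nat (i+1)) / (w + (of_nat (2*n) - of_nat i)))"
      by (simp add: A_def)
    moreover have "(\<Sum>i\<in>{..<k}. 1 / (x + of_nat (i+1)) - 1 / (x + (of_nat (2*n) - of_nat i))) = L k"
      unfolding sum_subtractf genH_alt[symmetric] genH_rev[OF k] L_def ..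
    ultimately show ?thesis by (simp add: A_def)
  qed
  define DS where "DS = (\<Sum>k\<in>{0..2*n}. c k * (A x n k * L k))"
  have dS: "((\<lambda>w. S n w y) has_field_derivative DS) (at x)"
    unfolding Sfun DS_def
    by (rule DERIV_sum, rule DERIV_cmult, rule dA) auto
  have dS2: "((\<lambda>w. RR n w y) has_field_derivative DS) (at x)"
    by (rule has_field_derivative_transform_within_open[OF dS openU xU]) (simp add: SR)
  define LR where "LR = (genH (2*n) z - genH n z) - (genH (2*n) x - genH n x)"
  have dR: "((\<lambda>w. RR n w y) has_field_derivative RR n x y * LR) (at x)"
  proof -
    define K where "K = fact (2*n) / fact n / Nm (y+1) n"
    have "((\<lambda>w. \<Prod>i\<in>{..<n}. (w + (y + 2 + of_nat n + of_nat i)) / (w + (1 + of_nat n + of_nat i))) has_field_derivative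
        (\<Prod>i\<in>{..<n}. (x + (y + 2 + of_nat n + of_nat i)) / (x + (1 + of_nat n + of_nat i)))
          * (\<Sum>i\<in>{..<n}. 1 / (x + (y + 2 + of_nat n + of_nat i)) - 1 / (x + (1 + of_nat n + of_nat i)))) (at x)"
    proof (rule deriv_prod_ratio)
      fix i assume i: "i \<in> {..<n}"
      have "1 + x + y + of_nat (n+1+i) \<noteq> 0" using i by (intro hHxy) auto
      moreover have "x + of_nat (n+1+i) \<noteq> 0" using i by (intro hHx) auto
      ultimately show "x + (y + 2 + of_nat n + of_nat i) \<noteq> 0 \<and> x + (1 + of_nat n + of_nat i) \<noteq> 0"
        by (simp add: algebra_simps)
    qed auto
    then have "((\<lambda>w. K * (\<Prod>i\<in>{..<n}. (w + (y + 2 + of_nat n + of_nat i)) / (w + (1 + of_nat n + of_nat i)))) has_field_derivative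
        K * ((\<Prod>i\<in>{..<n}. (x + (y + 2 + of_nat n + of_nat i)) / (x + (1 + of_nat n + of_nat i)))
          * (\<Sum>i\<in>{..<n}. 1 / (x + (y + 2 + of_nat n + of_nat i)) - 1 / (x + (1 + of_nat n + of_nat i))))) (at x)"
      by (rule DERIV_cmult)
    moreover have "(\<lambda>w. RR n w y) = (\<lambda>w. K * (\<Prod>i\<in>{..<n}. (w + (y + 2 + of_nat n + of_nat i)) / (w + (1 + of_nat n + of_nat i))))"
      unfolding K_def by (rule ext) (simp add: RR_alt)
    moreover have "(\<Sum>i\<in>{..<n}. 1 / (x + (y + 2 + of_nat n + of_nat i)) - 1 / (x + (1 + of_nat n + of_nat i))) = LR"
    proof -
      have a: "genH (2*n) z = genH n z + (\<Sum>i<n. 1 / (z + of_nat (n + 1 + i)))"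
        using genH_add[of n n z] by (simp add: mult_2)
      have b: "genH (2*n) x = genH n x + (\<Sum>i<n. 1 / (x + of_nat (n + 1 + i)))"
        using genH_add[of n n x] by (simp add: mult_2)
      have c1: "(\<Sum>i<n. 1 / (z + of_nat (n + 1 + i))) = (\<Sum>i<n. 1 / (x + (y + 2 + of_nat n + of_nat i)))"
        by (rule sum.cong) (simp_all add: z_def algebra_simps)
      have c2: "(\<Sum>i<n. 1 / (x + of_nat (n + 1 + i))) = (\<Sum>i<n. 1 / (x + (1 + of_nat n + of_nat i)))"
        by (rule sum.cong) (simp_all add: algebra_simps)
      show ?thesis unfolding LR_def a b c1 c2 sum_subtractf by simp
    qed
    moreover have "K * (\<Prod>i\<in>{..<n}. (x + (y + 2 + of_nat n + of_nat i)) / (x + (1 + of_nat n + of_nat i))) = RR n x y"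
      unfolding K_def by (simp add: RR_alt)
    ultimately show ?thesis by (metis mult.assoc)
  qed
  have DSeq: "DS = RR n x y * LR" using DERIV_unique[OF dS2 dR] .
  define T where "T = (\<Sum>k\<in>{0..2*n}. c k * A x n k * genH k x)"
  have Ssum: "(\<Sum>k\<in>{0..2*n}. c k * A x n k) = RR n x y"
    using SR[OF xU] Sfun by (metis (no_types, lifting))
  have sym: "(\<Sum>k\<in>{0..2*n}. c k * A x n k * genH (2*n-k) x) = T"
  proof -
    have "(\<Sum>k\<in>{0..2*n}. c k * A x n k * genH (2*n-k) x) = (\<Sum>k\<in>{0..2*n}. c (2*n-k) * A x n (2*n-k) * genH (2*n-(2*n-k)) x)"
      using sum.atLeastAtMost_rev[of "\<lambda>k. c k * A x n k * genH (2*n-k) x" 0 "2*n"] by simp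
    also have "\<dots> = T" unfolding T_def
    proof (rule sum.cong)
      fix k assume "k \<in> {0..2*n}"
      then have k: "k \<le> 2*n" by simp
      have p: "(-1::complex)^(2*n-k) = (-1)^k"
      proof -
        have "even (2*n-k) = even k" using k by presburger
        then show ?thesis by (simp add: minus_one_power_iff)
      qed
      have "c (2*n-k) = c k" unfolding c_def p binomial_symmetric[OF k, symmetric] using A_sym[OF hyj k] by simp
      then show "c (2*n-k) * A x n (2*n-k) * genH (2*n-(2*n-k)) x = c k * A x n k * genH k x"
        using A_sym[OF hHx k] k by simp
    qed simp
    finally show ?thesis .
  qed
  have DS2: "DS = 2 * T - genH (2*n) x * RR n x y"
  proof -
    have "DS = (\<Sum>k\<in>{0..2*n}. c k * A x n k * genH k x + c k * A x n k * genH (2*n-k) x - genH (2*n) x * (c k * A x n k))"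
      unfolding DS_def L_def by (rule sum.cong) (simp_all add: algebra_simps)
    also have "\<dots> = T + T - genH (2*n) x * RR n x y"
      unfolding sum_subtractf sum.distrib sum_distrib_left[symmetric] Ssum sym T_def ..
    finally show ?thesis by simp
  qed
  have Tval: "T = 1/2 * RR n x y * (genH n x - genH n z + genH (2*n) z)"
  proof -
    have "2 * T = RR n x y * (genH n x - genH n z + genH (2*n) z)"
      using DSeq DS2 unfolding LR_def by (simp add: algebra_simps)
    then show ?thesis by (simp add: field_simps)
  qed
  have lhs: "(\<Sum>k=0..2*n. (-1)^k * of_nat ((2*n) choose k)
            * (((x + of_nat k) gchoose k) * ((y + of_nat k) gchoose k))
            / (((x + of_nat (2*n)) gchoose k) * ((y + of_nat (2*n)) gchoose k))
            * genH k x) = T"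
    unfolding T_def
  proof (rule sum.cong)
    fix k assume "k \<in> {0..2*n}"
    have "((x + of_nat k) gchoose k) * ((y + of_nat k) gchoose k) / (((x + of_nat (2*n)) gchoose k) * ((y + of_nat (2*n)) gchoose k)) = A x n k * A y n k"
      by (simp only: times_divide_times_eq[symmetric] gch_ratio)
    then show "(-1)^k * of_nat ((2*n) choose k)
            * (((x + of_nat k) gchoose k) * ((y + of_nat k) gchoose k))
            / (((x + of_nat (2*n)) gchoose k) * ((y + of_nat (2*n)) gchoose k))
            * genH k x = c k * A x n k * genH k x"
      unfolding c_def by (simp only: times_divide_eq_right[symmetric]) (simp add: mult_ac)
  qed simp
  have rq: "(((x + of_nat n) gchoose n) * ((y + of_nat n) gchoose n)
                 * ((1 + x + y + of_nat (2*n)) gchoose (2*n)))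
             / (((x + of_nat (2*n)) gchoose (2*n)) * ((y + of_nat (2*n)) gchoose (2*n))
                 * ((1 + x + y + of_nat n) gchoose n)) = RR n x y"
  proof -
    have Px2: "pochhammer (x+1) (2*n) \<noteq> 0" by (rule poch_nz) (use hHx in auto)
    have Py2: "pochhammer (y+1) (2*n) \<noteq> 0" by (rule poch_nz) (use hyj in auto)
    have Pz0: "pochhammer (x + y + 1 + 1) n \<noteq> 0"
    proof (rule poch_nz)
      fix j assume "1 \<le> j" "j \<le> n"
      then have "1 + x + y + of_nat j \<noteq> 0" using hHxy by auto
      then show "x + y + 1 + of_nat j \<noteq> 0" by (simp add: algebra_simps)
    qed
    have Pz2: "pochhammer (x + y + 2) n \<noteq> 0" using Pz0 by (simp add: algebra_simps)
    have zz: "1 + x + y + 1 = x + y + 2" by simp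
    show ?thesis
      unfolding gch_poch poch_2n RR_def
      using Px2 Py2 Pz2 unfolding poch_2n z_def zz
      by (intro ratio_atoms) auto
  qed
  have rhs: "1/2 * (((x + of_nat n) gchoose n) * ((y + of_nat n) gchoose n)
                 * ((1 + x + y + of_nat (2*n)) gchoose (2*n)))
             / (((x + of_nat (2*n)) gchoose (2*n)) * ((y + of_nat (2*n)) gchoose (2*n))
                 * ((1 + x + y + of_nat n) gchoose n))
             * (genH n x - genH n (1 + x + y) + genH (2*n) (1 + x + y)) = T"
    unfolding Tval z_def by (subst times_divide_eq_right[symmetric], subst rq) (rule refl)
  show ?thesis using lhs rhs by simp
qed
end
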